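(* Let $n\ge 2$ be an integer and let $A$ be a Bernstein set of $(L_n,\tau_E|_{L_n})$. Then $(X_n,\tau(A))$ is Lindelöf but not perfect.
   Context: For $\overline{x},\overline{a}\in\mathbb R^n$ let $|\overline{x}-\overline{a}|$ be the Euclidean distance and $B(\overline{a},\epsilon)=\{\overline{x}\in\mathbb R^n:|\overline{x}-\overline{a}|<\epsilon\}$. Let $P_n=\{\overline{x}\in\mathbb R^n: x_n>0\}$, $L_n=\{\overline{x}\in\mathbb R^n: x_n=0\}$, $X_n=P_n\cup L_n$, and let $\tau_E$ denote the Euclidean topology on $X_n$ (so $(L_n,\tau_E|_{L_n})$ is homeomorphic to $\mathbb R^{n-1}$). For $\overline{a}\in L_n$ and $\epsilon>0$ put $\overline{a(\epsilon)}=(a_1,\dots,a_{n-1},\epsilon)$ and $\tilde B(\overline{a},\epsilon)=\{\overline{a}\}\cup B(\overline{a(\epsilon)},\epsilon)$. For $A\subseteq L_n$, the topology $\tau(A)$ on $X_n$ is generated by the local bases: at $\overline{a}\in P_n$, the sets $B(\overline{a},\epsilon)$ with $0<\epsilon<a_n$; at $\overline{a}\in A$, the sets $B(\overline{a},\epsilon)\cap X_n$ with $\epsilon>0$; at $\overline{a}\in L_n\setminus A$, the sets $\tilde B(\overline{a},\epsilon)$ with $\epsilon>0$. A subset $A$ of $(L_n,\tau_E|_{L_n})$ is a Bernstein set if both $A$ and $L_n\setminus A$ intersect every uncountable compact subset of $(L_n,\tau_E|_{L_n})$. A space is perfect if every closed set is a $G_\delta$-set. *)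

theory Defs
  imports "HOL-Analysis.Analysis"
begin

(* R^n is modelled as 'a \<times> real with 'a::euclidean_space of dimension n-1 \<ge> 1;
   the last coordinate x_n is snd.  dist on products is the Euclidean distance. *)

definition Pn :: "('a::euclidean_space \<times> real) set" where
  "Pn = {x. snd x > 0}"

definition Ln :: "('a::euclidean_space \<times> real) set" where
  "Ln = {x. snd x = 0}"

definition Xn :: "('a::euclidean_space \<times> real) set" where
  "Xn = Pn \<union> Ln"

definition tildeB :: "('a::euclidean_space \<times> real) \<Rightarrow> real \<Rightarrow> ('a \<times> real) set" where
  "tildeB a e = insert a (ball (fst a, e) e)"

definition basic_nbhd :: "('a::euclidean_space \<times> real) set \<Rightarrow> ('a \<times> real) \<Rightarrow> real \<Rightarrow> ('a \<times> real) set" where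
  "basic_nbhd A x e =
     (if x \<in> Pn then ball x e
      else if x \<in> A then ball x e \<inter> Xn
      else tildeB x e)"

definition admissible_radius :: "('a::euclidean_space \<times> real) \<Rightarrow> real \<Rightarrow> bool" where
  "admissible_radius x e \<longleftrightarrow> 0 < e \<and> (x \<in> Pn \<longrightarrow> e < snd x)"

definition tauA :: "('a::euclidean_space \<times> real) set \<Rightarrow> ('a \<times> real) topology" where
  "tauA A = topology (\<lambda>U. U \<subseteq> Xn \<and>
      (\<forall>x\<in>U. \<exists>e. admissible_radius x e \<and> basic_nbhd A x e \<subseteq> U))"

definition Bernstein_set :: "('a::euclidean_space \<times> real) set \<Rightarrow> bool" where
  "Bernstein_set A \<longleftrightarrow> A \<subseteq> Ln \<and>
     (\<forall>K. K \<subseteq> Ln \<and> compact K \<and> uncountable K \<longrightarrow> K \<inter> A \<noteq> {} \<and> K \<inter> (Ln - A) \<noteq> {})"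

definition perfect_space_top :: "'b topology \<Rightarrow> bool" where
  "perfect_space_top X \<longleftrightarrow> (\<forall>C. closedin X C \<longrightarrow> gdelta_in X C)"

end

theory Submission
  imports Defs
begin

lemma tildeB_mono:
  fixes a :: "'a::euclidean_space"
  assumes "0 < e" "e \<le> e'"
  shows "ball (a, e) e \<subseteq> ball (a, e') e'"
proof
  fix y assume "y \<in> ball (a, e) e"
  then have "dist (a, e) y < e" by simp
  moreover have "dist (a, e') y \<le> dist (a, e') (a, e) + dist (a, e) y" by (rule dist_triangle)
  moreover have "dist (a, e') (a, (e::real)) = e' - e" using assms by (simp add: dist_Pair_Pair dist_real_def)
  ultimately show "y \<in> ball (a, e') e'" by simp
qed

lemma ball_tilde_Pn:
  fixes a :: "'a::euclidean_space"
  assumes "0 < e"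
  shows "ball (a, e) e \<subseteq> Pn"
proof
  fix y assume "y \<in> ball (a, e) e"
  then have "dist (a, e) y < e" by simp
  moreover have "dist (snd (a,e)) (snd y) \<le> dist (a, e) y" by (rule dist_snd_le)
  ultimately have "dist e (snd y) < e" by simp
  then have "\<bar>e - snd y\<bar> < e" by (simp only: dist_real_def)
  then have "snd y > 0" by linarith
  then show "y \<in> Pn" by (simp add: Pn_def)
qed

lemma ball_Pn:
  fixes x :: "'a::euclidean_space \<times> real"
  assumes "e \<le> snd x"
  shows "ball x e \<subseteq> Pn"
proof
  fix y assume "y \<in> ball x e"
  then have "dist x y < e" by simp
  moreover have "dist (snd x) (snd y) \<le> dist x y" by (rule dist_snd_le)
  ultimately have "dist (snd x) (snd y) < e" by simp
  then have "\<bar>snd x - snd y\<bar> < e" by (simp only: dist_real_def)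
  then have "snd y > 0" using assms by linarith
  then show "y \<in> Pn" by (simp add: Pn_def)
qed

lemma basic_nbhd_mono:
  assumes "0 < e" "e \<le> e'"
  shows "basic_nbhd A x e \<subseteq> basic_nbhd A x e'"
  using assms tildeB_mono[OF assms, of "fst x"]
  by (auto simp: basic_nbhd_def tildeB_def)

lemma istop_tauA:
  fixes A :: "('a::euclidean_space \<times> real) set"
  shows "istopology (\<lambda>U. U \<subseteq> Xn \<and>
      (\<forall>x\<in>U. \<exists>e. admissible_radius x e \<and> basic_nbhd A x e \<subseteq> U))"
  unfolding istopology_def
proof (rule conjI; intro allI impI)
  fix S T :: "('a \<times> real) set"
  assume S: "S \<subseteq> Xn \<and> (\<forall>x\<in>S. \<exists>e. admissible_radius x e \<and> basic_nbhd A x e \<subseteq> S)"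
    and T: "T \<subseteq> Xn \<and> (\<forall>x\<in>T. \<exists>e. admissible_radius x e \<and> basic_nbhd A x e \<subseteq> T)"
  show "S \<inter> T \<subseteq> Xn \<and> (\<forall>x\<in>S \<inter> T. \<exists>e. admissible_radius x e \<and> basic_nbhd A x e \<subseteq> S \<inter> T)"
  proof (intro conjI ballI)
    show "S \<inter> T \<subseteq> Xn" using S by auto
  next
    fix x assume x: "x \<in> S \<inter> T"
    have "x \<in> S" using x by simp
    then obtain e1 where e1: "admissible_radius x e1" "basic_nbhd A x e1 \<subseteq> S"
      using S by metis
    have "x \<in> T" using x by simp
    then obtain e2 where e2: "admissible_radius x e2" "basic_nbhd A x e2 \<subseteq> T"
      using T by metis
    have p1: "0 < e1" using e1 by (simp add: admissible_radius_def)
    have p2: "0 < e2" using e2 by (simp add: admissible_radius_def)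
    have ad: "admissible_radius x (min e1 e2)" using e1(1) e2(1) unfolding admissible_radius_def by linarith
    have "basic_nbhd A x (min e1 e2) \<subseteq> basic_nbhd A x e1"
      by (rule basic_nbhd_mono) (use p1 p2 in auto)
    moreover have "basic_nbhd A x (min e1 e2) \<subseteq> basic_nbhd A x e2"
      by (rule basic_nbhd_mono) (use p1 p2 in auto)
    ultimately have "basic_nbhd A x (min e1 e2) \<subseteq> S \<inter> T"
      using e1(2) e2(2) by blast
    then show "\<exists>e. admissible_radius x e \<and> basic_nbhd A x e \<subseteq> S \<inter> T" using ad by blast
  qed
next
  fix K :: "('a \<times> real) set set"
  assume K: "\<forall>K\<in>K. K \<subseteq> Xn \<and> (\<forall>x\<in>K. \<exists>e. admissible_radius x e \<and> basic_nbhd A x e \<subseteq> K)"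
  show "\<Union>K \<subseteq> Xn \<and> (\<forall>x\<in>\<Union>K. \<exists>e. admissible_radius x e \<and> basic_nbhd A x e \<subseteq> \<Union>K)"
  proof (intro conjI ballI)
    show "\<Union>K \<subseteq> Xn" using K by (simp add: Union_least)
  next
    fix x assume "x \<in> \<Union>K"
    then obtain k where k: "k \<in> K" "x \<in> k" by blast
    then obtain e where e: "admissible_radius x e" "basic_nbhd A x e \<subseteq> k" using K by metis
    have "k \<subseteq> \<Union>K" using k(1) by (rule Union_upper)
    then show "\<exists>e. admissible_radius x e \<and> basic_nbhd A x e \<subseteq> \<Union>K" using e by blast
  qed
qed

lemma openin_tauA:
  "openin (tauA A) U \<longleftrightarrow> U \<subseteq> Xn \<and>
      (\<forall>x\<in>U. \<exists>e. admissible_radius x e \<and> basic_nbhd A x e \<subseteq> U)"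
  unfolding tauA_def topology_inverse'[OF istop_tauA] by (rule refl)

lemma Xn_open: "openin (tauA A) Xn"
  unfolding openin_tauA
proof (intro conjI ballI)
  fix x :: "'a::euclidean_space \<times> real" assume x: "x \<in> Xn"
  show "\<exists>e. admissible_radius x e \<and> basic_nbhd A x e \<subseteq> Xn"
  proof (cases "x \<in> Pn")
    case True
    then have "snd x > 0" by (simp add: Pn_def)
    then show ?thesis using True ball_Pn[of "snd x / 2" x]
      by (intro exI[of _ "snd x / 2"]) (auto simp: admissible_radius_def basic_nbhd_def Xn_def)
  next
    case False
    then show ?thesis using x ball_tilde_Pn[of 1 "fst x"]
      by (intro exI[of _ 1]) (auto simp: admissible_radius_def basic_nbhd_def Xn_def tildeB_def)
  qed
qed simp

lemma topspace_tauA: "topspace (tauA A) = Xn"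
proof
  show "topspace (tauA A) \<subseteq> Xn"
    unfolding topspace_def using openin_tauA[of A] by auto
  show "Xn \<subseteq> topspace (tauA A)"
    using Xn_open[of A] by (rule openin_subset)
qed

lemma countable_avoid_compact:
  fixes D :: "'a::euclidean_space set"
  assumes "countable D"
  obtains T where "compact T" "uncountable T" "T \<inter> D = {}"
proof -
  let ?S = "cbox (0::'a) One - D"
  have Dnull: "D \<in> null_sets lebesgue"
    using assms countable_imp_null_set_lborel null_sets_completionI by blast
  have Slm: "?S \<in> sets lebesgue"
    using Dnull by (intro sets.Diff) (auto intro: lmeasurable_cbox fmeasurableD)
  obtain T where T: "closed T" "T \<subseteq> ?S" "?S - T \<in> lmeasurable" "emeasure lebesgue (?S - T) < ennreal (1/2)"
    using sets_lebesgue_inner_closed[OF Slm, of "1/2"] by auto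
  have "compact T"
    using T by (meson Diff_subset bounded_cbox bounded_subset compact_eq_bounded_closed order_trans)
  moreover have "uncountable T"
  proof
    assume cT: "countable T"
    have N: "T \<union> D \<in> null_sets lebesgue"
      using cT assms countable_imp_null_set_lborel null_sets_completionI by (metis countable_Un)
    have "cbox (0::'a) One \<subseteq> (?S - T) \<union> (T \<union> D)" by auto
    then have "emeasure lebesgue (cbox (0::'a) One) \<le> emeasure lebesgue ((?S - T) \<union> (T \<union> D))"
      using T N by (intro emeasure_mono) auto
    also have "\<dots> = emeasure lebesgue (?S - T)"
      using N T by (simp add: emeasure_Un_null_set fmeasurableD)
    also have "\<dots> < ennreal (1/2)" by (rule T(4))
    finally have "emeasure lebesgue (cbox (0::'a) One) < ennreal (1/2)" .
    moreover have "emeasure lebesgue (cbox (0::'a) One) = 1"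
      by (simp add: emeasure_lborel_cbox_eq inner_diff_left)
    ultimately have "ennreal 1 < ennreal (1/2)" by simp
    then have "(1::real) < 1/2" by (subst (asm) ennreal_less_iff) auto
    then show False by simp
  qed
  moreover have "T \<inter> D = {}" using T by auto
  ultimately show ?thesis using that by blast
qed

lemma closed_Ln: "closed (Ln :: ('a::euclidean_space \<times> real) set)"
proof -
  have "(Ln :: ('a \<times> real) set) = UNIV \<times> {0}" by (auto simp: Ln_def)
  moreover have "closed (UNIV \<times> {0::real} :: ('a \<times> real) set)" by (intro closed_Times) auto
  ultimately show ?thesis by simp
qed

lemma Bern_closed:
  fixes A :: "('a::euclidean_space \<times> real) set"
  assumes B: "Bernstein_set A" and F: "closed F" "F \<subseteq> Ln" "uncountable F"
  shows "F \<inter> A \<noteq> {}"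
proof -
  have Feq: "F = (\<Union>m::nat. F \<inter> cball 0 (real m))"
  proof (intro equalityI subsetI)
    fix x assume "x \<in> F"
    obtain m :: nat where "norm x \<le> real m" using real_arch_simple by blast
    then show "x \<in> (\<Union>m::nat. F \<inter> cball 0 (real m))" using \<open>x \<in> F\<close> by auto
  qed auto
  have "\<exists>m::nat. uncountable (F \<inter> cball 0 (real m))"
  proof (rule ccontr)
    assume "\<not> (\<exists>m::nat. uncountable (F \<inter> cball 0 (real m)))"
    then have "countable (\<Union>m::nat. F \<inter> cball 0 (real m))" by (intro countable_UN) auto
    then show False using F(3) Feq by metis
  qed
  then obtain m :: nat where m: "uncountable (F \<inter> cball 0 (real m))" by blast
  have "compact (F \<inter> cball 0 (real m))" using F(1) by (simp add: closed_Int_compact)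
  moreover have "F \<inter> cball 0 (real m) \<subseteq> Ln" using F(2) by blast
  ultimately have "(F \<inter> cball 0 (real m)) \<inter> A \<noteq> {}"
    using B m unfolding Bernstein_set_def by (meson spec[of _ "F \<inter> cball 0 (real m)"])
  then show ?thesis by blast
qed

lemma Bern_uncountable:
  fixes A :: "('a::euclidean_space \<times> real) set"
  assumes B: "Bernstein_set A"
  shows "uncountable (Ln - A)"
proof
  assume c: "countable (Ln - A)"
  have cf: "countable (fst ` (Ln - A))" using c by (rule countable_image)
  obtain T :: "'a set" where T: "compact T" "uncountable T" "T \<inter> fst ` (Ln - A) = {}"
    by (rule countable_avoid_compact[OF cf])
  let ?K = "T \<times> {0::real}"
  have "compact ?K" using T by (simp add: compact_Times)
  moreover have "uncountable ?K"
  proof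
    assume "countable ?K"
    then have "countable (fst ` ?K)" by (rule countable_image)
    moreover have "fst ` ?K = T" by auto
    ultimately show False using T(2) by metis
  qed
  moreover have "?K \<subseteq> Ln" by (auto simp: Ln_def)
  ultimately have "?K \<inter> (Ln - A) \<noteq> {}" using B unfolding Bernstein_set_def by (meson spec[of _ ?K])
  then obtain y where "y \<in> ?K" "y \<in> Ln - A" by blast
  then show False using T(3) by force
qed

lemma A_Ln: "Bernstein_set A \<Longrightarrow> A \<subseteq> Ln" by (simp add: Bernstein_set_def)

lemma Ln_not_Pn: "x \<in> Ln \<Longrightarrow> x \<notin> Pn" by (simp add: Ln_def Pn_def)

lemma Xn_cases: "x \<in> Xn \<Longrightarrow> x \<in> Pn \<or> x \<in> Ln" by (simp add: Xn_def)

lemma not_perfect: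
  fixes A :: "('a::euclidean_space \<times> real) set"
  assumes B: "Bernstein_set A"
  shows "\<not> perfect_space_top (tauA A)"
proof
  assume P: "perfect_space_top (tauA A)"
  have AL: "A \<subseteq> Ln" using B by (simp add: Bernstein_set_def)
  have "openin (tauA A) (Xn - A)"
    unfolding openin_tauA
  proof (intro conjI ballI)
    show "Xn - A \<subseteq> Xn" by auto
  next
    fix x assume x: "x \<in> Xn - A"
    show "\<exists>e. admissible_radius x e \<and> basic_nbhd A x e \<subseteq> Xn - A"
    proof (cases "x \<in> Pn")
      case True
      then have "snd x > 0" by (simp add: Pn_def)
      moreover have "Pn \<inter> A = {}" using AL Ln_not_Pn by blast
      ultimately show ?thesis using True ball_Pn[of "snd x / 2" x]
        by (intro exI[of _ "snd x / 2"]) (auto simp: admissible_radius_def basic_nbhd_def Xn_def)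
    next
      case False
      moreover have "Pn \<inter> A = {}" using AL Ln_not_Pn by blast
      ultimately show ?thesis using x ball_tilde_Pn[of 1 "fst x"]
        by (intro exI[of _ 1]) (auto simp: admissible_radius_def basic_nbhd_def Xn_def tildeB_def)
    qed
  qed
  moreover have "A \<subseteq> Xn" using AL by (auto simp: Xn_def)
  ultimately have "closedin (tauA A) A" by (simp add: closedin_def topspace_tauA)
  then have "gdelta_in (tauA A) A" using P by (simp add: perfect_space_top_def)
  then obtain \<U> where U: "countable \<U>" "\<And>U. U \<in> \<U> \<Longrightarrow> openin (tauA A) U" "A = Xn \<inter> \<Inter>\<U>"
    unfolding gdelta_in_def relative_to_def intersection_of_def topspace_tauA by blast
  define V where "V U = \<Union>{ball a e | a e. a \<in> A \<and> e > 0 \<and> ball a e \<inter> Xn \<subseteq> U}" for U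
  have Vopen: "open (V U)" for U unfolding V_def by auto
  have AV: "A \<subseteq> V U" if Uin: "U \<in> \<U>" for U
  proof
    fix a assume a: "a \<in> A"
    then have "a \<in> U" using U(3) Uin by blast
    then obtain e where e: "admissible_radius a e" "basic_nbhd A a e \<subseteq> U"
      using U(2)[OF Uin] unfolding openin_tauA by blast
    have "a \<notin> Pn" using a AL Ln_not_Pn by blast
    then have "ball a e \<inter> Xn \<subseteq> U" using e a by (simp add: basic_nbhd_def)
    moreover have "e > 0" using e by (simp add: admissible_radius_def)
    ultimately have "ball a e \<in> {ball a e | a e. a \<in> A \<and> e > 0 \<and> ball a e \<inter> Xn \<subseteq> U}"
      using a by blast
    moreover have "a \<in> ball a e" using \<open>e > 0\<close> by simp
    ultimately show "a \<in> V U" unfolding V_def by (rule UnionI)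
  qed
  have VL: "V U \<inter> Ln \<subseteq> U" for U
    unfolding V_def by (auto simp: Xn_def)
  have cover: "Ln - A \<subseteq> (\<Union>U\<in>\<U>. Ln - V U)"
  proof
    fix x assume x: "x \<in> Ln - A"
    then have "x \<in> Xn" by (simp add: Xn_def)
    then have "x \<notin> \<Inter>\<U>" using x U(3) by blast
    then obtain U where "U \<in> \<U>" "x \<notin> U" by blast
    then show "x \<in> (\<Union>U\<in>\<U>. Ln - V U)" using VL x by blast
  qed
  have "\<exists>U\<in>\<U>. uncountable (Ln - V U)"
  proof (rule ccontr)
    assume "\<not> ?thesis"
    then have "countable (\<Union>U\<in>\<U>. Ln - V U)" using U(1) by (intro countable_UN) blast+
    then have "countable (Ln - A)" using cover countable_subset by blast
    then show False using Bern_uncountable[OF B] by simp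
  qed
  then obtain U where U1: "U \<in> \<U>" "uncountable (Ln - V U)" by blast
  have "closed (Ln - V U)" using closed_Ln Vopen by (rule closed_Diff)
  then have "(Ln - V U) \<inter> A \<noteq> {}" using Bern_closed[OF B _ _ U1(2)] by blast
  then show False using AV[OF U1(1)] by blast
qed

lemma Lindelof_tauA:
  fixes A :: "('a::euclidean_space \<times> real) set"
  assumes B: "Bernstein_set A"
  shows "Lindelof_space (tauA A)"
  unfolding Lindelof_space_def topspace_tauA
proof (intro allI impI)
  fix \<U> assume H: "(\<forall>U\<in>\<U>. openin (tauA A) U) \<and> \<Union>\<U> = Xn"
  then have H1: "\<And>U. U \<in> \<U> \<Longrightarrow> openin (tauA A) U" and H2: "\<Union>\<U> = Xn" by auto
  have sub: "U \<subseteq> Xn" if "U \<in> \<U>" for U using H2 that by (metis Union_upper)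
  have inU: "\<exists>U\<in>\<U>. x \<in> U" if "x \<in> Xn" for x :: "'a \<times> real"
  proof -
    have "x \<in> \<Union>\<U>" using H2 that by simp
    then show ?thesis by (rule UnionE) blast
  qed
  have AL: "A \<subseteq> Ln" using B by (simp add: Bernstein_set_def)
  define \<B> where "\<B> = {B. open B \<and> (\<exists>U\<in>\<U>. B \<inter> Xn \<subseteq> U)}"
  have "\<And>S. S \<in> \<B> \<Longrightarrow> openin (top_of_set UNIV) S" unfolding \<B>_def by simp
  then obtain \<B>' where B': "\<B>' \<subseteq> \<B>" "countable \<B>'" "\<Union>\<B>' = \<Union>\<B>"
    by (rule Lindelof_openin)
  define W where "W = \<Union>\<B>"
  have PAW: "Pn \<union> A \<subseteq> W"
  proof
    fix x assume x: "x \<in> Pn \<union> A"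
    then have "x \<in> Xn" using AL by (auto simp: Xn_def)
    then obtain U where U: "U \<in> \<U>" "x \<in> U" using inU by blast
    then obtain e where e: "admissible_radius x e" "basic_nbhd A x e \<subseteq> U"
      using H1[OF U(1)] unfolding openin_tauA by blast
    have "ball x e \<inter> Xn \<subseteq> U"
    proof (cases "x \<in> Pn")
      case True then show ?thesis using e by (auto simp: basic_nbhd_def)
    next
      case False then have "x \<in> A" using x by blast
      then show ?thesis using e False by (simp add: basic_nbhd_def)
    qed
    then have "ball x e \<in> \<B>" unfolding \<B>_def using U(1) by blast
    moreover have "x \<in> ball x e" using e by (simp add: admissible_radius_def)
    ultimately show "x \<in> W" unfolding W_def by (rule UnionI)
  qed
  have Wopen: "open W" unfolding W_def \<B>_def by auto
  define F where "F = Ln - W"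
  have "closed F" unfolding F_def using closed_Ln Wopen by (rule closed_Diff)
  moreover have "F \<inter> A = {}" using PAW unfolding F_def by blast
  moreover have "F \<subseteq> Ln" unfolding F_def by blast
  ultimately have cF: "countable F" using Bern_closed[OF B, of F] by blast
  have "\<forall>B\<in>\<B>'. \<exists>U. U \<in> \<U> \<and> B \<inter> Xn \<subseteq> U" using B'(1) unfolding \<B>_def by blast
  then obtain g where g: "\<And>B. B \<in> \<B>' \<Longrightarrow> g B \<in> \<U> \<and> B \<inter> Xn \<subseteq> g B" by metis
  have FX: "F \<subseteq> Xn" unfolding F_def Xn_def by blast
  have "\<forall>x\<in>F. \<exists>U. U \<in> \<U> \<and> x \<in> U" using inU FX by blast
  then obtain h where h: "\<And>x. x \<in> F \<Longrightarrow> h x \<in> \<U> \<and> x \<in> h x" by metis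
  show "\<exists>\<V>. countable \<V> \<and> \<V> \<subseteq> \<U> \<and> \<Union>\<V> = Xn"
  proof (intro exI conjI)
    show "countable (g ` \<B>' \<union> h ` F)" using B'(2) cF by simp
    show gh: "g ` \<B>' \<union> h ` F \<subseteq> \<U>" using g h by blast
    show "\<Union>(g ` \<B>' \<union> h ` F) = Xn"
    proof
      show "\<Union>(g ` \<B>' \<union> h ` F) \<subseteq> Xn"
      proof (rule Union_least)
        fix V assume "V \<in> g ` \<B>' \<union> h ` F"
        then have "V \<in> \<U>" using gh by blast
        then show "V \<subseteq> Xn" by (rule sub)
      qed
      show "Xn \<subseteq> \<Union>(g ` \<B>' \<union> h ` F)"
      proof
        fix x :: "'a \<times> real" assume x: "x \<in> Xn"
        show "x \<in> \<Union>(g ` \<B>' \<union> h ` F)"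
        proof (cases "x \<in> W")
          case True
          then obtain B where BB: "B \<in> \<B>'" "x \<in> B" using B'(3) unfolding W_def by blast
          then have "x \<in> g B" using g[OF BB(1)] x by blast
          moreover have "g B \<in> g ` \<B>' \<union> h ` F" using BB(1) by blast
          ultimately show ?thesis by (rule UnionI[rotated])
        next
          case False
          then have xF: "x \<in> F" using x PAW unfolding F_def Xn_def by blast
          then have "x \<in> h x" using h by blast
          moreover have "h x \<in> g ` \<B>' \<union> h ` F" using xF by blast
          ultimately show ?thesis by (rule UnionI[rotated])
        qed
      qed
    qed
  qed
qed

theorem mainTheorem18:
  fixes A :: "('a::euclidean_space \<times> real) set"
  assumes "Bernstein_set A"
  shows "Lindelof_space (tauA A) \<and> \<not> perfect_space_top (tauA A)"
  using Lindelof_tauA[OF assms] not_perfect[OF assms] by simp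

end
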